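(* Fix $\pi_1,\pi_1'\in(0,1)$ and set $\pi_2=1-\pi_1$, $\pi_2'=1-\pi_1'$. For real numbers $\mu_1<\mu_2$ and $\sigma>0$, define the densities on $\mathbb{R}$ $$p(x)=\pi_1\mathcal{N}(x;\mu_1,\sigma^2)+\pi_2\mathcal{N}(x;\mu_2,\sigma^2),\qquad p'(x)=\pi_1'\mathcal{N}(x;\mu_1,\sigma^2)+\pi_2'\mathcal{N}(x;\mu_2,\sigma^2),$$ which differ only in their mixing proportions. Fix $\delta\neq 0$ and put $x=\frac{\mu_1+\mu_2}{2}+\delta$. Then the dependence of the score $\nabla_x\log p(x)$ on the mixing proportion vanishes as $\frac{\mu_1-\mu_2}{\sigma^2}\to-\infty$: for every $\varepsilon>0$ there is $K>0$ such that for all $\mu_1<\mu_2$ and $\sigma>0$ with $\frac{\mu_1-\mu_2}{\sigma^2}<-K$, $$\Bigl|\nabla_x\log p(x)-\nabla_x\log p'(x)\Bigr|<\varepsilon .$$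
   Context: $\mathcal{N}(x;\mu,\sigma^2)$ denotes the Gaussian density with mean $\mu$ and variance $\sigma^2$. The score of a density $p$ on $\mathbb{R}$ is $\nabla_x\log p(x)$, the derivative with respect to $x$ (not with respect to parameters). *)

theory Defs
  imports "HOL-Probability.Probability"
begin

text \<open>Two-component Gaussian mixture with common standard deviation s (variance s^2):
  w * N(x; m1, s^2) + (1 - w) * N(x; m2, s^2).  normal_density m s x is the Gaussian
  density with mean m and standard deviation s.\<close>
definition gmm2 :: "real \<Rightarrow> real \<Rightarrow> real \<Rightarrow> real \<Rightarrow> real \<Rightarrow> real" where
  "gmm2 w m1 m2 s x = w * normal_density m1 s x + (1 - w) * normal_density m2 s x"

end

theory Submission
  imports Defs "HOL-Real_Asymp.Real_Asymp"
begin

lemma nd_deriv: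
  assumes "s \<noteq> 0"
  shows "(normal_density m s has_real_derivative normal_density m s y * (-(y-m)/s\<^sup>2)) (at y)"
proof -
  obtain c where c: "normal_density m s = (\<lambda>y. c * exp (-(y - m)\<^sup>2/ (2 * s\<^sup>2)))"
    unfolding normal_density_def[abs_def] by blast
  show ?thesis unfolding c using assms
    by (auto intro!: derivative_eq_intros simp: field_simps power2_eq_square)
qed

lemma nd_pos: "s \<noteq> 0 \<Longrightarrow> normal_density m s y > 0"
  unfolding normal_density_def by simp

lemma gmm_pos: "0 < w \<Longrightarrow> w < 1 \<Longrightarrow> s \<noteq> 0 \<Longrightarrow> gmm2 w m1 m2 s y > 0"
  unfolding gmm2_def using nd_pos[of s m1 y] nd_pos[of s m2 y] by (simp add: add_pos_pos)

lemma score: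
  assumes "0 < w" "w < 1" "s \<noteq> 0"
  shows "deriv (\<lambda>y. ln (gmm2 w m1 m2 s y)) y =
    (w * normal_density m1 s y * (-(y-m1)/s\<^sup>2) + (1-w) * normal_density m2 s y * (-(y-m2)/s\<^sup>2))
      / gmm2 w m1 m2 s y"
proof -
  have "((\<lambda>y. gmm2 w m1 m2 s y) has_real_derivative
     (w * (normal_density m1 s y * (-(y-m1)/s\<^sup>2)) + (1-w) * (normal_density m2 s y * (-(y-m2)/s\<^sup>2)))) (at y)"
    unfolding gmm2_def by (intro DERIV_add DERIV_cmult nd_deriv assms)
  then have "((\<lambda>y. ln (gmm2 w m1 m2 s y)) has_real_derivative
     (w * (normal_density m1 s y * (-(y-m1)/s\<^sup>2)) + (1-w) * (normal_density m2 s y * (-(y-m2)/s\<^sup>2))) / gmm2 w m1 m2 s y) (at y)"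
    using gmm_pos[OF assms, of m1 m2 y]
    by (auto intro!: derivative_eq_intros simp: divide_inverse mult.commute)
  then show ?thesis by (simp add: DERIV_imp_deriv mult.assoc)
qed

lemma nd_ratio:
  assumes "s \<noteq> 0"
  shows "normal_density m1 s ((m1+m2)/2+d) = normal_density m2 s ((m1+m2)/2+d) * exp (-((m2-m1)/s\<^sup>2) * d)"
proof -
  have "-((m1+m2)/2+d - m1)\<^sup>2/ (2 * s\<^sup>2) = -((m1+m2)/2+d - m2)\<^sup>2/ (2 * s\<^sup>2) + (-((m2-m1)/s\<^sup>2) * d)"
    using assms by (simp add: field_simps power2_eq_square)
  then show ?thesis unfolding normal_density_def by (simp only: exp_add)
qed

lemma score_x:
  assumes "0 < w" "w < 1" "s \<noteq> 0"
  shows "deriv (\<lambda>y. ln (gmm2 w m1 m2 s y)) ((m1+m2)/2+d) =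
    -((m1+m2)/2+d-m2)/s\<^sup>2 - ((m2-m1)/s\<^sup>2) * (w * exp (-((m2-m1)/s\<^sup>2) * d) / (w * exp (-((m2-m1)/s\<^sup>2) * d) + (1-w)))"
proof -
  define N where "N = normal_density m2 s ((m1+m2)/2+d)"
  define E where "E = exp (-((m2-m1)/s\<^sup>2) * d)"
  have N: "N > 0" unfolding N_def using nd_pos assms by auto
  have E: "E > 0" unfolding E_def by simp
  have den: "w * E + (1-w) > 0" using E assms by (simp add: add_pos_pos)
  have g: "gmm2 w m1 m2 s ((m1+m2)/2+d) = N * (w * E + (1-w))"
    unfolding gmm2_def nd_ratio[OF assms(3)] N_def E_def by (simp add: algebra_simps)
  define a1 where "a1 = -((m1+m2)/2+d-m1)/s\<^sup>2"
  define a2 where "a2 = -((m1+m2)/2+d-m2)/s\<^sup>2"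
  define D where "D = (m2-m1)/s\<^sup>2"
  have a: "a1 = a2 - D" unfolding a1_def a2_def D_def using assms(3) by (simp add: field_simps)
  have "deriv (\<lambda>y. ln (gmm2 w m1 m2 s y)) ((m1+m2)/2+d) = (w * (N*E) * a1 + (1-w) * N * a2) / (N * (w * E + (1-w)))"
    unfolding score[OF assms] g unfolding nd_ratio[OF assms(3)] N_def[symmetric] E_def[symmetric] a1_def a2_def by simp
  also have "\<dots> = a2 - D * (w * E / (w * E + (1-w)))"
  proof -
    define Q where "Q = w * E + (1-w)"
    have Q: "Q \<noteq> 0" using den Q_def by simp
    have "w * (N*E) * a1 + (1-w) * N * a2 = N * (Q * a2 - D * (w * E))"
      unfolding a Q_def by (simp add: algebra_simps)
    then show ?thesis using N Q unfolding Q_def[symmetric]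
      by (simp add: diff_divide_distrib)
  qed
  finally show ?thesis unfolding a2_def D_def E_def by simp
qed


lemma q_bound:
  fixes w D d :: real
  assumes "0 < w" "w < 1" "D > 0" "d \<noteq> 0"
  defines "E \<equiv> exp (-D * d)"
  shows "\<exists>lo. (lo = 0 \<or> lo = 1) \<and> (d > 0 \<longleftrightarrow> lo = 0) \<and>
     \<bar>w * E / (w * E + (1-w)) - lo\<bar> \<le> (w/(1-w) + (1-w)/w) * exp (-D * \<bar>d\<bar>)"
proof (cases "d > 0")
  case True
  have E: "E > 0" unfolding E_def by simp
  have den: "w * E + (1-w) \<ge> 1 - w" using E assms by simp
  have "w * E / (w * E + (1-w)) \<le> w * E / (1-w)"
    using den E assms by (intro divide_left_mono) (auto intro!: mult_pos_pos add_pos_pos)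
  also have "\<dots> \<le> (w/(1-w) + (1-w)/w) * exp (-D * \<bar>d\<bar>)"
  proof -
    have "w * E / (1-w) = (w/(1-w)) * E" by simp
    also have "\<dots> \<le> (w/(1-w) + (1-w)/w) * E" using assms E by (intro mult_right_mono) auto
    finally show ?thesis using True unfolding E_def by simp
  qed
  finally have "w * E / (w * E + (1-w)) \<le> (w/(1-w) + (1-w)/w) * exp (-D * \<bar>d\<bar>)" .
  moreover have "w * E / (w * E + (1-w)) \<ge> 0" using E assms by simp
  ultimately show ?thesis using True by (intro exI[of _ 0]) (simp only: diff_zero abs_of_nonneg, simp)
next
  case False
  then have dn: "d < 0" using assms by simp
  have E: "E > 0" unfolding E_def by simp
  have Einv: "exp (-D * \<bar>d\<bar>) = 1 / E" unfolding E_def using dn by (simp add: exp_minus inverse_eq_divide)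
  have den: "w * E + (1-w) \<ge> w * E" using E assms by simp
  have eq: "1 - w * E / (w * E + (1-w)) = (1-w) / (w * E + (1-w))"
  proof -
    have dp: "w * E + (1-w) \<noteq> 0" using E assms by (smt (verit) mult_pos_pos)
    have "(1-w) / (w * E + (1-w)) = ((w * E + (1-w)) - w * E) / (w * E + (1-w))" by simp
    also have "\<dots> = 1 - w * E / (w * E + (1-w))" using dp by (simp only: diff_divide_distrib right_inverse_eq divide_self_if) simp
    finally show ?thesis by simp
  qed
  have "(1-w) / (w * E + (1-w)) \<le> (1-w) / (w * E)"
    using den E assms by (intro divide_left_mono) (auto intro!: mult_pos_pos add_pos_pos)
  also have "\<dots> \<le> (w/(1-w) + (1-w)/w) * exp (-D * \<bar>d\<bar>)"
  proof -
    have "(1-w) / (w * E) = ((1-w)/w) * (1/E)" by simp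
    also have "\<dots> \<le> (w/(1-w) + (1-w)/w) * (1/E)" using assms E by (intro mult_right_mono) auto
    finally show ?thesis unfolding Einv .
  qed
  finally have "\<bar>w * E / (w * E + (1-w)) - 1\<bar> \<le> (w/(1-w) + (1-w)/w) * exp (-D * \<bar>d\<bar>)"
    using eq E assms by (simp add: add_pos_pos abs_if)
  then show ?thesis using False by (intro exI[of _ 1]) auto
qed

lemma lim0:
  assumes "a > 0"
  shows "((\<lambda>D::real. C * (D * exp (-D * a))) \<longlongrightarrow> 0) at_top"
proof -
  have "((\<lambda>D::real. D * exp (-D * a)) \<longlongrightarrow> 0) at_top" using assms by real_asymp
  then show ?thesis using tendsto_mult_right_zero by blast
qed


theorem lemma2:
  fixes p1 p1' \<delta> :: real
  assumes "0 < p1" "p1 < 1" "0 < p1'" "p1' < 1" "\<delta> \<noteq> 0"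
  shows "\<forall>\<epsilon>>0. \<exists>K>0. \<forall>\<mu>1 \<mu>2 \<sigma>::real. \<mu>1 < \<mu>2 \<longrightarrow> \<sigma> > 0 \<longrightarrow> (\<mu>1 - \<mu>2) / \<sigma>\<^sup>2 < - K \<longrightarrow>
     \<bar>deriv (\<lambda>y. ln (gmm2 p1 \<mu>1 \<mu>2 \<sigma> y)) ((\<mu>1 + \<mu>2) / 2 + \<delta>)
      - deriv (\<lambda>y. ln (gmm2 p1' \<mu>1 \<mu>2 \<sigma> y)) ((\<mu>1 + \<mu>2) / 2 + \<delta>)\<bar> < \<epsilon>"
proof (intro allI impI)
  fix \<epsilon> :: real assume eps: "\<epsilon> > 0"
  define B1 where "B1 = p1/(1-p1) + (1-p1)/p1"
  define B2 where "B2 = p1'/(1-p1') + (1-p1')/p1'"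
  define C where "C = B1 + B2"
  have "\<bar>\<delta>\<bar> > 0" using assms by simp
  from order_tendstoD(2)[OF lim0[OF this, of C] eps]
  obtain K0 where K0: "\<And>D. D \<ge> K0 \<Longrightarrow> C * (D * exp (-D * \<bar>\<delta>\<bar>)) < \<epsilon>"
    unfolding eventually_at_top_linorder by blast
  show "\<exists>K>0. \<forall>\<mu>1 \<mu>2 \<sigma>::real. \<mu>1 < \<mu>2 \<longrightarrow> \<sigma> > 0 \<longrightarrow> (\<mu>1 - \<mu>2) / \<sigma>\<^sup>2 < - K \<longrightarrow>
     \<bar>deriv (\<lambda>y. ln (gmm2 p1 \<mu>1 \<mu>2 \<sigma> y)) ((\<mu>1 + \<mu>2) / 2 + \<delta>)
      - deriv (\<lambda>y. ln (gmm2 p1' \<mu>1 \<mu>2 \<sigma> y)) ((\<mu>1 + \<mu>2) / 2 + \<delta>)\<bar> < \<epsilon>"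
  proof (intro exI[of _ "max K0 1"] conjI allI impI)
    show "max K0 1 > 0" by simp
    fix \<mu>1 \<mu>2 \<sigma> :: real
    assume h: "\<mu>1 < \<mu>2" "\<sigma> > 0" "(\<mu>1 - \<mu>2) / \<sigma>\<^sup>2 < - max K0 1"
    define D where "D = (\<mu>2 - \<mu>1) / \<sigma>\<^sup>2"
    have Dgt: "D > max K0 1" using h(3) unfolding D_def
      by (metis minus_diff_eq minus_divide_left neg_less_iff_less)
    hence Dpos: "D > 0" by simp
    define E where "E = exp (-D * \<delta>)"
    have s0: "\<sigma> \<noteq> 0" using h by simp
    have diff: "deriv (\<lambda>y. ln (gmm2 p1 \<mu>1 \<mu>2 \<sigma> y)) ((\<mu>1 + \<mu>2) / 2 + \<delta>)
      - deriv (\<lambda>y. ln (gmm2 p1' \<mu>1 \<mu>2 \<sigma> y)) ((\<mu>1 + \<mu>2) / 2 + \<delta>)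
      = D * (p1' * E / (p1' * E + (1-p1')) - p1 * E / (p1 * E + (1-p1)))"
      unfolding score_x[OF assms(1,2) s0] score_x[OF assms(3,4) s0] D_def[symmetric] E_def
      by (simp add: algebra_simps)
    obtain lo where lo: "lo = 0 \<or> lo = 1" "\<delta> > 0 \<longleftrightarrow> lo = 0"
      "\<bar>p1 * E / (p1 * E + (1-p1)) - lo\<bar> \<le> B1 * exp (-D * \<bar>\<delta>\<bar>)"
      using q_bound[OF assms(1,2) Dpos assms(5)] unfolding E_def B1_def by blast
    obtain lo' where lo': "lo' = 0 \<or> lo' = 1" "\<delta> > 0 \<longleftrightarrow> lo' = 0"
      "\<bar>p1' * E / (p1' * E + (1-p1')) - lo'\<bar> \<le> B2 * exp (-D * \<bar>\<delta>\<bar>)"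
      using q_bound[OF assms(3,4) Dpos assms(5)] unfolding E_def B2_def by blast
    have "lo = lo'" using lo lo' by auto
    hence "\<bar>p1' * E / (p1' * E + (1-p1')) - p1 * E / (p1 * E + (1-p1))\<bar> \<le> C * exp (-D * \<bar>\<delta>\<bar>)"
      using lo(3) lo'(3) unfolding C_def by (simp add: algebra_simps abs_le_iff) linarith?
    hence "\<bar>D * (p1' * E / (p1' * E + (1-p1')) - p1 * E / (p1 * E + (1-p1)))\<bar> \<le> D * (C * exp (-D * \<bar>\<delta>\<bar>))"
      using Dpos by (simp add: abs_mult)
    also have "\<dots> < \<epsilon>" using K0[of D] Dgt by (simp add: algebra_simps)
    finally show "\<bar>deriv (\<lambda>y. ln (gmm2 p1 \<mu>1 \<mu>2 \<sigma> y)) ((\<mu>1 + \<mu>2) / 2 + \<delta>)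
      - deriv (\<lambda>y. ln (gmm2 p1' \<mu>1 \<mu>2 \<sigma> y)) ((\<mu>1 + \<mu>2) / 2 + \<delta>)\<bar> < \<epsilon>"
      unfolding diff .
  qed
qed

end
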